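(* Let $P\subset\mathbb R^d$ be a $d$-polytope and $S$ a simplex facet of $P$ in bounded position. Then for any two disjoint sets $\mathcal F,\mathcal N\subseteq\operatorname{adj}(S)$ the set $V_S(\mathcal F,\mathcal N;P)$ is nonempty.
   Context: For a facet $F$ of $P$ let $H_F=\{x:\langle x,a_F\rangle=\ell_F\}$ be its affine hull, oriented so that $P\subseteq\{x:\langle x,a_F\rangle\geq\ell_F\}$; $H_F^+=\{x:\langle x,a_F\rangle>\ell_F\}$, $H_F^-=\{x:\langle x,a_F\rangle<\ell_F\}$. Two facets are adjacent if they share a ridge; $\operatorname{adj}(S)$ is the set of facets adjacent to $S$. A simplex facet is a facet combinatorially equivalent to a $(d-1)$-simplex. $S$ is in bounded position if for every set of $d$ facets in $\operatorname{adj}(S)$ their hyperplanes meet in a point of $H_S^-$. $V_S(\mathcal F,\mathcal N;P)$ is the set of points lying in $H_F^-$ for $F\in\mathcal N\cup\{S\}$, in $H_F$ for $F\in\mathcal F$, and in $H_F^+$ for all other facets $F$ of $P$. *)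

theory Defs
  imports "HOL-Analysis.Analysis"
begin

definition ridge_of :: "'a::euclidean_space set \<Rightarrow> 'a set \<Rightarrow> bool" where
  "ridge_of R P \<longleftrightarrow> R face_of P \<and> aff_dim R = aff_dim P - 2"

definition adjacent_facets :: "'a::euclidean_space set \<Rightarrow> 'a set \<Rightarrow> 'a set \<Rightarrow> bool" where
  "adjacent_facets P F G \<longleftrightarrow> F facet_of P \<and> G facet_of P \<and> F \<noteq> G \<and>
     (\<exists>R. ridge_of R P \<and> R \<subseteq> F \<and> R \<subseteq> G)"

definition adj :: "'a::euclidean_space set \<Rightarrow> 'a set \<Rightarrow> 'a set set" where
  "adj P S = {F. adjacent_facets P F S}"

definition comb_equiv :: "'a::euclidean_space set \<Rightarrow> 'b::euclidean_space set \<Rightarrow> bool" where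
  "comb_equiv P Q \<longleftrightarrow> (\<exists>f. bij_betw f {F. F face_of P} {G. G face_of Q} \<and>
     (\<forall>F G. F face_of P \<longrightarrow> G face_of P \<longrightarrow> (F \<subseteq> G \<longleftrightarrow> f F \<subseteq> f G)))"

definition simplex_facet :: "'a::euclidean_space set \<Rightarrow> 'a set \<Rightarrow> bool" where
  "simplex_facet P S \<longleftrightarrow> S facet_of P \<and>
     (\<exists>T::'a set. (int DIM('a) - 1) simplex T \<and> comb_equiv S T)"

definition facet_ineq :: "'a::euclidean_space set \<Rightarrow> 'a set \<Rightarrow> 'a \<Rightarrow> real \<Rightarrow> bool" where
  "facet_ineq P F a l \<longleftrightarrow> a \<noteq> 0 \<and> affine hull F = {x. a \<bullet> x = l} \<and> P \<subseteq> {x. a \<bullet> x \<ge> l}"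

definition Hyp :: "'a::euclidean_space set \<Rightarrow> 'a set" where
  "Hyp F = affine hull F"

definition Hplus :: "'a::euclidean_space set \<Rightarrow> 'a set \<Rightarrow> 'a set" where
  "Hplus P F = {x. \<exists>a l. facet_ineq P F a l \<and> a \<bullet> x > l}"

definition Hminus :: "'a::euclidean_space set \<Rightarrow> 'a set \<Rightarrow> 'a set" where
  "Hminus P F = {x. \<exists>a l. facet_ineq P F a l \<and> a \<bullet> x < l}"

definition bounded_position :: "'a::euclidean_space set \<Rightarrow> 'a set \<Rightarrow> bool" where
  "bounded_position P S \<longleftrightarrow>
     (\<forall>\<G>. \<G> \<subseteq> adj P S \<and> card \<G> = DIM('a) \<longrightarrow>
        (\<exists>x. (\<Inter>F\<in>\<G>. Hyp F) = {x} \<and> x \<in> Hminus P S))"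

definition V_S :: "'a::euclidean_space set \<Rightarrow> 'a set set \<Rightarrow> 'a set set \<Rightarrow> 'a set \<Rightarrow> 'a set" where
  "V_S S \<F> \<N> P = {x.
     (\<forall>F\<in>\<N> \<union> {S}. x \<in> Hminus P F) \<and>
     (\<forall>F\<in>\<F>. x \<in> Hyp F) \<and>
     (\<forall>F. F facet_of P \<and> F \<notin> \<N> \<union> {S} \<union> \<F> \<longrightarrow> x \<in> Hplus P F)}"

end

theory Submission
  imports Defs
begin

definition coat :: "'a::euclidean_space set \<Rightarrow> 'a set set" where
  "coat S = {R. R face_of S \<and> R \<noteq> S \<and> (\<forall>R'. R' face_of S \<and> R \<subseteq> R' \<longrightarrow> R' = R \<or> R' = S)}"

lemma hull_sub_indep:
  fixes V :: "'a::euclidean_space set"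
  assumes "\<not> affine_dependent V" "c \<subseteq> V" "c' \<subseteq> V" "convex hull c \<subseteq> convex hull c'"
  shows "c \<subseteq> c'"
proof
  fix x assume "x \<in> c"
  show "x \<in> c'"
  proof (rule ccontr)
    assume "x \<notin> c'"
    then have "c' \<subseteq> V - {x}" using assms(3) by blast
    have "x \<in> convex hull c" using \<open>x \<in> c\<close> by (simp add: hull_inc)
    then have "x \<in> convex hull c'" using assms(4) by blast
    also have "\<dots> \<subseteq> affine hull c'" by (simp add: convex_hull_subset_affine_hull)
    also have "\<dots> \<subseteq> affine hull (V - {x})" by (simp add: \<open>c' \<subseteq> V - {x}\<close> hull_mono)
    finally have "x \<in> affine hull (V - {x})" .
    moreover have "x \<in> V" using assms(2) \<open>x \<in> c\<close> by blast
    ultimately show False using assms(1) unfolding affine_dependent_def by blast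
  qed
qed

lemma simplex_coat:
  fixes V :: "'a::euclidean_space set"
  assumes ind: "\<not> affine_dependent V"
  shows "coat (convex hull V) = (\<lambda>v. convex hull (V - {v})) ` V"
proof
  show "coat (convex hull V) \<subseteq> (\<lambda>v. convex hull (V - {v})) ` V"
  proof
    fix X assume X: "X \<in> coat (convex hull V)"
    then have Xf: "X face_of convex hull V" "X \<noteq> convex hull V" unfolding coat_def by blast+
    then obtain c where c: "c \<subseteq> V" "X = convex hull c"
      using face_of_convex_hull_affine_independent[OF ind] by blast
    have "c \<noteq> V" using Xf(2) c(2) by blast
    then obtain v where v: "v \<in> V" "v \<notin> c" using c by blast
    have Yf: "convex hull (V - {v}) face_of convex hull V"
      using face_of_convex_hull_affine_independent[OF ind] by blast
    have "c \<subseteq> V - {v}" using c v by blast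
    then have "X \<subseteq> convex hull (V - {v})" using c(2) by (simp add: hull_mono)
    then have "convex hull (V - {v}) = X \<or> convex hull (V - {v}) = convex hull V"
      using X Yf unfolding coat_def by blast
    moreover have "convex hull (V - {v}) \<noteq> convex hull V"
    proof
      assume "convex hull (V - {v}) = convex hull V"
      then have "V \<subseteq> V - {v}" using hull_sub_indep[OF ind, of V "V - {v}"] by blast
      then show False using v by blast
    qed
    ultimately have "X = convex hull (V - {v})" by blast
    then show "X \<in> (\<lambda>v. convex hull (V - {v})) ` V" using v(1) by blast
  qed
next
  show "(\<lambda>v. convex hull (V - {v})) ` V \<subseteq> coat (convex hull V)"
  proof
    fix X assume "X \<in> (\<lambda>v. convex hull (V - {v})) ` V"
    then obtain v where v: "v \<in> V" "X = convex hull (V - {v})" by blast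
    have Xf: "X face_of convex hull V"
      using face_of_convex_hull_affine_independent[OF ind] v by blast
    have ne: "X \<noteq> convex hull V"
    proof
      assume "X = convex hull V"
      then have "V \<subseteq> V - {v}" using hull_sub_indep[OF ind, of V "V - {v}"] v(2) by blast
      then show False using v by blast
    qed
    have "Z = X \<or> Z = convex hull V" if zz: "Z face_of convex hull V" "X \<subseteq> Z" for Z
    proof -
      obtain c' where c': "c' \<subseteq> V" "Z = convex hull c'"
        using zz(1) face_of_convex_hull_affine_independent[OF ind] by blast
      have "V - {v} \<subseteq> c'" using hull_sub_indep[OF ind, of "V - {v}" c'] c' v zz(2) by blast
      then have "c' = V - {v} \<or> c' = V" using c'(1) by blast
      then show ?thesis using c'(2) v(2) by blast
    qed
    then show "X \<in> coat (convex hull V)" using Xf ne unfolding coat_def by blast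
  qed
qed

lemma simplex_coat_inj:
  fixes V :: "'a::euclidean_space set"
  assumes ind: "\<not> affine_dependent V"
  shows "inj_on (\<lambda>v. convex hull (V - {v})) V"
proof
  fix v w assume "v \<in> V" "w \<in> V" "convex hull (V - {v}) = convex hull (V - {w})"
  then have "V - {v} \<subseteq> V - {w}" using hull_sub_indep[OF ind, of "V - {v}" "V - {w}"] by auto
  then show "v = w" using \<open>v \<in> V\<close> \<open>w \<in> V\<close> by auto
qed

lemma transfer:
  fixes S :: "'a::euclidean_space set" and T :: "'b::euclidean_space set"
  assumes ce: "comb_equiv S T" and sx: "n simplex T" and cS: "convex S"
  shows "card (coat S) = nat (n + 1)"
    and "\<forall>R0\<in>coat S. \<exists>p\<in>S. \<forall>R\<in>coat S - {R0}. p \<in> R"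
proof -
  obtain f where bij: "bij_betw f {F. F face_of S} {G. G face_of T}"
    and mono: "\<And>F G. F face_of S \<Longrightarrow> G face_of S \<Longrightarrow> (F \<subseteq> G \<longleftrightarrow> f F \<subseteq> f G)"
    using ce unfolding comb_equiv_def by blast
  obtain V where ind: "\<not> affine_dependent V" and cV: "int (card V) = n + 1" and T: "T = convex hull V"
    using sx unfolding simplex_def by blast
  have fin: "finite V" using ind aff_independent_finite by blast
  have fS: "\<And>F. F face_of S \<Longrightarrow> f F face_of T" using bij unfolding bij_betw_def by auto
  have surj: "\<And>G. G face_of T \<Longrightarrow> \<exists>F. F face_of S \<and> f F = G"
    using bij unfolding bij_betw_def by (metis (mono_tags, lifting) imageE mem_Collect_eq)
  have inj: "\<And>F G. F face_of S \<Longrightarrow> G face_of S \<Longrightarrow> f F = f G \<Longrightarrow> F = G"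
    using bij unfolding bij_betw_def inj_on_def by auto
  have cT: "convex T" using T by simp
  have fSS: "f S = T"
  proof -
    obtain X where X: "X face_of S" "f X = T" using surj[OF face_of_refl[OF cT]] by blast
    have "X \<subseteq> S" using X(1) face_of_imp_subset by auto
    then have "T \<subseteq> f S" using mono[OF X(1) face_of_refl[OF cS]] X by auto
    moreover have "f S \<subseteq> T" using fS[OF face_of_refl[OF cS]] face_of_imp_subset by auto
    ultimately show ?thesis by auto
  qed
  have f0: "f {} = {}"
  proof -
    obtain X where X: "X face_of S" "f X = {}" using surj[of "{}"] by auto
    then show ?thesis using mono[OF empty_face_of X(1)] by auto
  qed
  have coat_img: "f ` coat S = coat T"
  proof
    show "f ` coat S \<subseteq> coat T"
    proof
      fix Y assume "Y \<in> f ` coat S"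
      then obtain R where R: "R \<in> coat S" "Y = f R" by auto
      have Rf: "R face_of S" "R \<noteq> S" using R unfolding coat_def by auto
      have "Y face_of T" using fS Rf R by auto
      moreover have "Y \<noteq> T"
      proof
        assume "Y = T"
        then have "f R = f S" using R(2) fSS by simp
        then show False using inj[OF Rf(1) face_of_refl[OF cS]] Rf(2) by blast
      qed
      moreover have "Z = Y \<or> Z = T" if zz: "Z face_of T" "Y \<subseteq> Z" for Z
      proof -
        obtain X where X: "X face_of S" "f X = Z" using surj[OF zz(1)] by blast
        have "f R \<subseteq> f X" using X(2) zz(2) R(2) by simp
        then have "R \<subseteq> X" using mono[OF Rf(1) X(1)] by simp
        then have "X = R \<or> X = S" using R(1) X(1) unfolding coat_def by blast
        then show ?thesis using X(2) R(2) fSS by blast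
      qed
      ultimately show "Y \<in> coat T" unfolding coat_def by blast
    qed
  next
    show "coat T \<subseteq> f ` coat S"
    proof
      fix Y assume Y: "Y \<in> coat T"
      have "Y face_of T" using Y unfolding coat_def by blast
      then obtain R where R: "R face_of S" "f R = Y" using surj by blast
      have "Y \<noteq> T" using Y unfolding coat_def by blast
      then have "R \<noteq> S" using R(2) fSS by blast
      moreover have "X = R \<or> X = S" if "X face_of S" "R \<subseteq> X" for X
      proof -
        have "Y \<subseteq> f X" using mono[OF R(1) that(1)] that(2) R(2) by simp
        then have "f X = Y \<or> f X = T" using Y fS[OF that(1)] unfolding coat_def by blast
        then show ?thesis using inj[OF that(1) R(1)] inj[OF that(1) face_of_refl[OF cS]] R(2) fSS by argo
      qed
      ultimately have "R \<in> coat S" using R unfolding coat_def by blast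
      then show "Y \<in> f ` coat S" using R by auto
    qed
  qed
  have injc: "inj_on f (coat S)" unfolding inj_on_def coat_def using inj by blast
  have "card (coat S) = card (coat T)" using card_image[OF injc] coat_img by simp
  also have "\<dots> = card V" unfolding T simplex_coat[OF ind] using card_image[OF simplex_coat_inj[OF ind]] by simp
  finally show "card (coat S) = nat (n + 1)" using cV by (metis nat_int)
  show "\<forall>R0\<in>coat S. \<exists>p\<in>S. \<forall>R\<in>coat S - {R0}. p \<in> R"
  proof
    fix R0 assume R0: "R0 \<in> coat S"
    then have "f R0 \<in> coat T" using coat_img by auto
    then obtain v0 where v0: "v0 \<in> V" "f R0 = convex hull (V - {v0})"
      unfolding T simplex_coat[OF ind] by auto
    have "{v0} face_of T" unfolding T face_of_singleton
      using extreme_point_of_convex_hull_affine_independent[OF ind] v0 by auto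
    then obtain Z where Z: "Z face_of S" "f Z = {v0}" using surj by blast
    have "Z \<noteq> {}" using Z f0 by auto
    then obtain p where p: "p \<in> Z" by auto
    have "p \<in> S" using p Z face_of_imp_subset by auto
    moreover have "p \<in> R" if R: "R \<in> coat S - {R0}" for R
    proof -
      have Rf: "R face_of S" using R unfolding coat_def by auto
      have R0f: "R0 face_of S" using R0 unfolding coat_def by auto
      have "f R \<in> coat T" using coat_img R by auto
      then obtain v where v: "v \<in> V" "f R = convex hull (V - {v})"
        unfolding T simplex_coat[OF ind] by auto
      have "R \<noteq> R0" using R by blast
      then have "f R \<noteq> f R0" using inj[OF Rf R0f] by blast
      then have "v \<noteq> v0" using v(2) v0(2) by metis
      then have "v0 \<in> V - {v}" using v0(1) by blast
      then have "v0 \<in> f R" using v(2) hull_inc by metis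
      then have "{v0} \<subseteq> f R" by blast
      then have "Z \<subseteq> R" using mono[OF Z(1) Rf] Z(2) by simp
      then show ?thesis using p by blast
    qed
    ultimately show "\<exists>p\<in>S. \<forall>R\<in>coat S - {R0}. p \<in> R" by blast
  qed
qed


lemma facet_exposed:
  fixes P :: "'a::euclidean_space set"
  assumes pP: "polytope P" and dP: "aff_dim P = int DIM('a)" and F: "F facet_of P"
  shows "\<exists>a l. facet_ineq P F a l" and "F = P \<inter> affine hull F"
proof -
  have "polyhedron P" using pP polytope_imp_polyhedron by blast
  then have "F exposed_face_of P" using F exposed_face_of_polyhedron facet_of_imp_face_of by blast
  then obtain a b where Pab: "P \<subseteq> {x. a \<bullet> x \<le> b}" and Fab: "F = P \<inter> {x. a \<bullet> x = b}"
    unfolding exposed_face_of_def by blast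
  have Fne: "F \<noteq> {}" and Fd: "aff_dim F = aff_dim P - 1" using F unfolding facet_of_def by blast+
  have a0: "a \<noteq> 0"
  proof
    assume "a = 0"
    then have "F = P \<or> F = {}" using Fab by auto
    then show False using Fne Fd by auto
  qed
  have sub: "affine hull F \<subseteq> {x. a \<bullet> x = b}"
    using Fab by (intro hull_minimal) (auto simp: affine_hyperplane)
  have "aff_dim (affine hull F) = aff_dim {x. a \<bullet> x = b}"
    using Fd dP a0 by simp
  then have eq: "affine hull F = {x. a \<bullet> x = b}"
    using affine_dim_equal[OF affine_affine_hull affine_hyperplane _ sub] Fne by simp
  have "facet_ineq P F (-a) (-b)"
    unfolding facet_ineq_def using a0 eq Pab by auto
  then show "\<exists>a l. facet_ineq P F a l" by blast
  show "F = P \<inter> affine hull F" using Fab eq by simp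
qed

lemma facet_ineq_scale:
  fixes P :: "'a::euclidean_space set"
  assumes pP: "polytope P" and dP: "aff_dim P = int DIM('a)" and F: "F facet_of P"
    and fi: "facet_ineq P F a l" and fi': "facet_ineq P F a' l'"
  shows "\<exists>c>0. a' = c *\<^sub>R a \<and> l' = c * l"
proof -
  have a0: "a \<noteq> 0" and H: "affine hull F = {x. a \<bullet> x = l}" and Pa: "P \<subseteq> {x. a \<bullet> x \<ge> l}"
    using fi unfolding facet_ineq_def by blast+
  have a0': "a' \<noteq> 0" and H': "affine hull F = {x. a' \<bullet> x = l'}"
    using fi' unfolding facet_ineq_def by blast+
  have HH: "{x. a \<bullet> x = l} = {x. a' \<bullet> x = l'}" using H H' by simp
  have "F \<noteq> {}" using F unfolding facet_of_def by blast
  then obtain z where "z \<in> F" by blast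
  then have z: "a \<bullet> z = l" "a' \<bullet> z = l'" using H H' hull_inc by fastforce+
  have perp: "a' \<bullet> v = 0" if "a \<bullet> v = 0" for v
  proof -
    have "a \<bullet> (z + v) = l" using that z by (simp add: inner_add_right)
    then have "a' \<bullet> (z + v) = l'" using HH by blast
    then show ?thesis using z by (simp add: inner_add_right)
  qed
  define c where "c = (a' \<bullet> a) / (a \<bullet> a)"
  have aa: "a \<bullet> a \<noteq> 0" using a0 by simp
  define v where "v = a' - c *\<^sub>R a"
  have "a \<bullet> v = 0" unfolding v_def c_def using aa
    by (simp add: inner_diff_right inner_commute)
  then have "a' \<bullet> v = 0" by (rule perp)
  then have "v \<bullet> v = 0" using \<open>a \<bullet> v = 0\<close> unfolding v_def
    by (simp add: inner_diff_left)
  then have "v = 0" by simp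
  then have a'eq: "a' = c *\<^sub>R a" unfolding v_def by simp
  have l'eq: "l' = c * l" using z a'eq by simp
  have "c \<noteq> 0" using a0' a'eq by auto
  obtain y where y: "y \<in> P" "a \<bullet> y \<noteq> l"
  proof -
    have "\<not> P \<subseteq> {x. a \<bullet> x = l}"
    proof
      assume "P \<subseteq> {x. a \<bullet> x = l}"
      then have "aff_dim P \<le> aff_dim {x. a \<bullet> x = l}" by (rule aff_dim_subset)
      then show False using dP a0 by simp
    qed
    then show ?thesis using that by blast
  qed
  have "a \<bullet> y > l" using y Pa by force
  have "a' \<bullet> y \<ge> l'" using fi' y unfolding facet_ineq_def by blast
  then have "c * (a \<bullet> y - l) \<ge> 0" using a'eq l'eq by (simp add: algebra_simps)
  then have "c \<ge> 0" using \<open>a \<bullet> y > l\<close> by (simp add: zero_le_mult_iff)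
  then have "c > 0" using \<open>c \<noteq> 0\<close> by simp
  then show ?thesis using a'eq l'eq by blast
qed

definition na :: "'a::euclidean_space set \<Rightarrow> 'a set \<Rightarrow> 'a" where
  "na P F = fst (SOME p. facet_ineq P F (fst p) (snd p))"
definition nl :: "'a::euclidean_space set \<Rightarrow> 'a set \<Rightarrow> real" where
  "nl P F = snd (SOME p. facet_ineq P F (fst p) (snd p))"

lemma na_ok:
  fixes P :: "'a::euclidean_space set"
  assumes "polytope P" "aff_dim P = int DIM('a)" "F facet_of P"
  shows "facet_ineq P F (na P F) (nl P F)"
proof -
  obtain a l where "facet_ineq P F a l" using facet_exposed[OF assms] by blast
  then have "\<exists>p. facet_ineq P F (fst p) (snd p)" by auto
  from someI_ex[OF this] show ?thesis unfolding na_def nl_def .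
qed

lemma Hminus_iff:
  fixes P :: "'a::euclidean_space set"
  assumes "polytope P" "aff_dim P = int DIM('a)" "F facet_of P"
  shows "x \<in> Hminus P F \<longleftrightarrow> na P F \<bullet> x < nl P F"
proof
  assume "x \<in> Hminus P F"
  then obtain a l where fi: "facet_ineq P F a l" "a \<bullet> x < l" unfolding Hminus_def by blast
  obtain c where c: "c > 0" "na P F = c *\<^sub>R a" "nl P F = c * l"
    using facet_ineq_scale[OF assms fi(1) na_ok[OF assms]] by blast
  show "na P F \<bullet> x < nl P F" using c fi(2) by simp
next
  assume "na P F \<bullet> x < nl P F"
  then show "x \<in> Hminus P F" unfolding Hminus_def using na_ok[OF assms] by blast
qed

lemma Hplus_iff:
  fixes P :: "'a::euclidean_space set"
  assumes "polytope P" "aff_dim P = int DIM('a)" "F facet_of P"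
  shows "x \<in> Hplus P F \<longleftrightarrow> na P F \<bullet> x > nl P F"
proof
  assume "x \<in> Hplus P F"
  then obtain a l where fi: "facet_ineq P F a l" "a \<bullet> x > l" unfolding Hplus_def by blast
  obtain c where c: "c > 0" "na P F = c *\<^sub>R a" "nl P F = c * l"
    using facet_ineq_scale[OF assms fi(1) na_ok[OF assms]] by blast
  show "na P F \<bullet> x > nl P F" using c fi(2) by simp
next
  assume "na P F \<bullet> x > nl P F"
  then show "x \<in> Hplus P F" unfolding Hplus_def using na_ok[OF assms] by blast
qed

lemma Hyp_iff:
  fixes P :: "'a::euclidean_space set"
  assumes "polytope P" "aff_dim P = int DIM('a)" "F facet_of P"
  shows "Hyp F = {x. na P F \<bullet> x = nl P F}"
  using na_ok[OF assms] unfolding facet_ineq_def Hyp_def by blast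

lemma facet_sub_eq:
  fixes P :: "'a::euclidean_space set"
  assumes pP: "polytope P" "aff_dim P = int DIM('a)" and F: "F facet_of P" and G: "G facet_of P"
    and sub: "G \<subseteq> affine hull F"
  shows "G = F"
proof (rule ccontr)
  assume ne: "G \<noteq> F"
  have "G \<subseteq> P" using G facet_of_imp_subset by blast
  then have "G \<subseteq> F" using sub facet_exposed(2)[OF pP F] by blast
  then have "G face_of F"
    using face_of_subset[of G P F] G F facet_of_imp_face_of facet_of_imp_subset by blast
  then have "aff_dim G < aff_dim F"
    using face_of_aff_dim_lt[of F G] ne F facet_of_imp_face_of face_of_imp_convex by blast
  then show False using F G unfolding facet_of_def by simp
qed

lemma coat_iff:
  fixes S :: "'a::euclidean_space set"
  assumes pS: "polytope S" and ne: "S \<noteq> {}"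
  shows "R \<in> coat S \<longleftrightarrow> R face_of S \<and> aff_dim R = aff_dim S - 1"
proof
  have cS: "convex S" using pS polytope_imp_convex by blast
  assume R: "R \<in> coat S"
  then have Rf: "R face_of S" "R \<noteq> S"
    and mx: "\<And>R'. R' face_of S \<Longrightarrow> R \<subseteq> R' \<Longrightarrow> R' = R \<or> R' = S"
    unfolding coat_def by blast+
  show "R face_of S \<and> aff_dim R = aff_dim S - 1"
  proof (cases "R = {}")
    case True
    obtain v where v: "v extreme_point_of S"
      using extreme_point_exists_convex[OF polytope_imp_compact[OF pS] cS ne] by blast
    then have "{v} face_of S" by (simp add: face_of_singleton)
    then have "{v} = S" using mx[of "{v}"] True by blast
    then have "aff_dim S = 0" by (metis aff_dim_sing)
    then show ?thesis using Rf True by simp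
  next
    case False
    obtain F where F: "F facet_of S" "R \<subseteq> F"
      using face_of_polyhedron_subset_facet[OF polytope_imp_polyhedron[OF pS] Rf(1) False Rf(2)] by blast
    have "F face_of S" "F \<noteq> S" using F(1) facet_of_imp_face_of facet_of_irrefl by blast+
    then have "F = R" using mx F(2) by blast
    then show ?thesis using F(1) unfolding facet_of_def by blast
  qed
next
  have cS: "convex S" using pS polytope_imp_convex by blast
  assume R: "R face_of S \<and> aff_dim R = aff_dim S - 1"
  have "R \<noteq> S" using R by auto
  moreover have "R' = R \<or> R' = S" if R': "R' face_of S" "R \<subseteq> R'" for R'
  proof (rule ccontr)
    assume "\<not> (R' = R \<or> R' = S)"
    then have n: "R' \<noteq> R" "R' \<noteq> S" by blast+
    have "R face_of R'" using face_of_subset[of R S R'] R R' face_of_imp_subset by blast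
    then have "aff_dim R < aff_dim R'" using face_of_aff_dim_lt[of R' R] n R' face_of_imp_convex by blast
    moreover have "aff_dim R' < aff_dim S" using face_of_aff_dim_lt[OF cS R'(1) n(2)] .
    ultimately show False using R by simp
  qed
  ultimately show "R \<in> coat S" using R unfolding coat_def by blast
qed


lemma key_alg:
  fixes x0 aS :: "'a::euclidean_space" and a p :: "'i \<Rightarrow> 'a" and l :: "'i \<Rightarrow> real"
  assumes fin: "finite C"
    and uniq: "\<And>y. (\<forall>R\<in>C. a R \<bullet> y = l R) \<longleftrightarrow> y = x0"
    and hS: "aS \<bullet> x0 < lS"
    and pS: "\<And>R. R \<in> C \<Longrightarrow> aS \<bullet> p R = lS"
    and pz: "\<And>R R'. R \<in> C \<Longrightarrow> R' \<in> C \<Longrightarrow> R' \<noteq> R \<Longrightarrow> a R' \<bullet> p R = l R'"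
    and pp: "\<And>R. R \<in> C \<Longrightarrow> a R \<bullet> p R \<ge> l R"
  shows "\<forall>R\<in>C. a R \<bullet> (p R - x0) > 0"
    and "\<And>R R'. R \<in> C \<Longrightarrow> R' \<in> C \<Longrightarrow> a R' \<bullet> (p R - x0) = (if R' = R then a R \<bullet> (p R - x0) else 0)"
    and "\<And>v. v = (\<Sum>R\<in>C. ((a R \<bullet> v) / (a R \<bullet> (p R - x0))) *\<^sub>R (p R - x0))"
    and "\<And>R. R \<in> C \<Longrightarrow> aS \<bullet> (p R - x0) = lS - aS \<bullet> x0"
proof -
  define w where "w R = p R - x0" for R
  define g where "g R = a R \<bullet> w R" for R
  have ax0: "a R \<bullet> x0 = l R" if "R \<in> C" for R using uniq[of x0] that by blast
  have offd: "a R' \<bullet> w R = (if R' = R then g R else 0)" if "R \<in> C" "R' \<in> C" for R R'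
    using pz[OF that] ax0[OF that(2)] unfolding w_def g_def by (auto simp: inner_diff_right)
  have gpos: "g R > 0" if R: "R \<in> C" for R
  proof -
    have "g R \<ge> 0" using pp[OF R] ax0[OF R] unfolding g_def w_def by (simp add: inner_diff_right)
    moreover have "g R \<noteq> 0"
    proof
      assume g0: "g R = 0"
      have "\<forall>R'\<in>C. a R' \<bullet> p R = l R'"
      proof
        fix R' assume R': "R' \<in> C"
        show "a R' \<bullet> p R = l R'"
        proof (cases "R' = R")
          case True then show ?thesis using g0 ax0[OF R] unfolding g_def w_def by (simp add: inner_diff_right)
        next
          case False then show ?thesis using pz[OF R R'] by blast
        qed
      qed
      then have "p R = x0" using uniq by blast
      then show False using pS[OF R] hS by simp
    qed
    ultimately show ?thesis by simp
  qed
  show "\<forall>R\<in>C. a R \<bullet> (p R - x0) > 0" using gpos unfolding g_def w_def by blast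
  show "\<And>R R'. R \<in> C \<Longrightarrow> R' \<in> C \<Longrightarrow> a R' \<bullet> (p R - x0) = (if R' = R then a R \<bullet> (p R - x0) else 0)"
    using offd unfolding g_def w_def by blast
  show "aS \<bullet> (p R - x0) = lS - aS \<bullet> x0" if "R \<in> C" for R
    using pS[OF that] by (simp add: inner_diff_right)
  show "v = (\<Sum>R\<in>C. ((a R \<bullet> v) / (a R \<bullet> (p R - x0))) *\<^sub>R (p R - x0))" for v
  proof -
    define z where "z = x0 + v - (\<Sum>R\<in>C. ((a R \<bullet> v) / g R) *\<^sub>R w R)"
    have "a R' \<bullet> z = l R'" if R': "R' \<in> C" for R'
    proof -
      have "(\<Sum>R\<in>C. ((a R \<bullet> v) / g R) * (a R' \<bullet> w R)) = (\<Sum>R\<in>C. (if R = R' then (a R' \<bullet> v) / g R' * g R' else 0))"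
        by (rule sum.cong) (auto simp: offd R')
      also have "\<dots> = a R' \<bullet> v" using R' fin gpos[OF R'] by simp
      finally have s: "(\<Sum>R\<in>C. ((a R \<bullet> v) / g R) * (a R' \<bullet> w R)) = a R' \<bullet> v" .
      have "a R' \<bullet> z = a R' \<bullet> x0 + a R' \<bullet> v - (\<Sum>R\<in>C. ((a R \<bullet> v) / g R) * (a R' \<bullet> w R))"
        unfolding z_def by (simp add: inner_diff_right inner_add_right inner_sum_right)
      then show ?thesis using s ax0[OF R'] by simp
    qed
    then have "z = x0" using uniq by blast
    then show ?thesis unfolding z_def g_def w_def by (simp add: algebra_simps)
  qed
qed

lemma key_sign:
  fixes x0 aS aG :: "'a::euclidean_space" and a p :: "'i \<Rightarrow> 'a" and l :: "'i \<Rightarrow> real"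
  assumes fin: "finite C"
    and uniq: "\<And>y. (\<forall>R\<in>C. a R \<bullet> y = l R) \<longleftrightarrow> y = x0"
    and hS: "aS \<bullet> x0 < lS"
    and pS: "\<And>R. R \<in> C \<Longrightarrow> aS \<bullet> p R = lS"
    and pz: "\<And>R R'. R \<in> C \<Longrightarrow> R' \<in> C \<Longrightarrow> R' \<noteq> R \<Longrightarrow> a R' \<bullet> p R = l R'"
    and pp: "\<And>R. R \<in> C \<Longrightarrow> a R \<bullet> p R \<ge> l R"
    and G0: "aG \<bullet> x0 \<le> lG"
    and Gp: "\<And>R. R \<in> C \<Longrightarrow> aG \<bullet> p R \<ge> lG"
  shows "\<exists>\<mu>0 \<mu>. \<mu>0 \<ge> 0 \<and> (\<forall>R\<in>C. \<mu> R \<ge> 0) \<and>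
           (\<forall>x. aG \<bullet> x - lG = \<mu>0 * (aS \<bullet> x - lS) + (\<Sum>R\<in>C. \<mu> R * (a R \<bullet> x - l R)))"
proof -
  note K = key_alg[OF fin uniq hS pS pz pp]
  define w where "w R = p R - x0" for R
  define g where "g R = a R \<bullet> w R" for R
  have gpos: "\<And>R. R \<in> C \<Longrightarrow> g R > 0" using K(1) unfolding g_def w_def by blast
  have offd: "\<And>R R'. R \<in> C \<Longrightarrow> R' \<in> C \<Longrightarrow> a R' \<bullet> w R = (if R' = R then g R else 0)"
    using K(2) unfolding g_def w_def by blast
  have ax0: "a R \<bullet> x0 = l R" if "R \<in> C" for R using uniq[of x0] that by blast
  define f0 where "f0 = aG \<bullet> x0 - lG"
  define h0 where "h0 = aS \<bullet> x0 - lS"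
  have h0n: "h0 < 0" using hS unfolding h0_def by simp
  define \<mu>0 where "\<mu>0 = f0 / h0"
  define \<mu> where "\<mu> R = (aG \<bullet> p R - lG) / g R" for R
  have \<mu>0pos: "\<mu>0 \<ge> 0" unfolding \<mu>0_def using h0n G0 f0_def by (simp add: divide_nonpos_neg)
  have \<mu>pos: "\<forall>R\<in>C. \<mu> R \<ge> 0" unfolding \<mu>_def using Gp gpos by (simp add: less_imp_le)
  define u where "u = aG - \<mu>0 *\<^sub>R aS - (\<Sum>R\<in>C. \<mu> R *\<^sub>R a R)"
  have uw: "u \<bullet> w R' = 0" if R': "R' \<in> C" for R'
  proof -
    have "(\<Sum>R\<in>C. \<mu> R * (a R \<bullet> w R')) = (\<Sum>R\<in>C. (if R = R' then \<mu> R' * g R' else 0))"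
      by (rule sum.cong) (auto simp: offd R')
    also have "\<dots> = \<mu> R' * g R'" using R' fin by simp
    also have "\<dots> = aG \<bullet> p R' - lG" unfolding \<mu>_def using gpos[OF R'] by simp
    finally have s: "(\<Sum>R\<in>C. \<mu> R * (a R \<bullet> w R')) = aG \<bullet> p R' - lG" .
    have sw: "aS \<bullet> w R' = - h0" using pS[OF R'] unfolding w_def h0_def by (simp add: inner_diff_right)
    have "u \<bullet> w R' = aG \<bullet> w R' - \<mu>0 * (aS \<bullet> w R') - (\<Sum>R\<in>C. \<mu> R * (a R \<bullet> w R'))"
      unfolding u_def by (simp add: inner_diff_left inner_sum_left)
    also have "\<dots> = aG \<bullet> w R' + f0 - (aG \<bullet> p R' - lG)"
      using s sw h0n unfolding \<mu>0_def by simp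
    also have "\<dots> = 0" unfolding w_def f0_def by (simp add: inner_diff_right)
    finally show ?thesis .
  qed
  have "u = (\<Sum>R\<in>C. ((a R \<bullet> u) / (a R \<bullet> (p R - x0))) *\<^sub>R (p R - x0))" by (rule K(3))
  then have "u \<bullet> u = (\<Sum>R\<in>C. ((a R \<bullet> u) / (a R \<bullet> (p R - x0))) * (u \<bullet> w R))"
    unfolding w_def by (metis (no_types, lifting) inner_scaleR_right inner_sum_right sum.cong)
  also have "\<dots> = 0" using uw by simp
  finally have u0: "u = 0" by simp
  then have aGeq: "aG = \<mu>0 *\<^sub>R aS + (\<Sum>R\<in>C. \<mu> R *\<^sub>R a R)" unfolding u_def by (simp add: algebra_simps)
  have lin: "aG \<bullet> x = \<mu>0 * (aS \<bullet> x) + (\<Sum>R\<in>C. \<mu> R * (a R \<bullet> x))" for x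
    by (subst aGeq) (simp add: inner_add_left inner_sum_left)
  have "(\<Sum>R\<in>C. \<mu> R * (a R \<bullet> x0)) = (\<Sum>R\<in>C. \<mu> R * l R)" by (rule sum.cong) (auto simp: ax0)
  then have lG: "lG = \<mu>0 * lS + (\<Sum>R\<in>C. \<mu> R * l R)"
    using lin[of x0] h0n unfolding \<mu>0_def f0_def h0_def by (simp add: field_simps)
  have "aG \<bullet> x - lG = \<mu>0 * (aS \<bullet> x - lS) + (\<Sum>R\<in>C. \<mu> R * (a R \<bullet> x - l R))" for x
    using lin[of x] lG by (simp add: algebra_simps sum_subtractf)
  then show ?thesis using \<mu>0pos \<mu>pos by blast
qed

lemma key_solve:
  fixes x0 aS :: "'a::euclidean_space" and a p :: "'i \<Rightarrow> 'a" and l :: "'i \<Rightarrow> real"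
  assumes fin: "finite C"
    and uniq: "\<And>y. (\<forall>R\<in>C. a R \<bullet> y = l R) \<longleftrightarrow> y = x0"
    and hS: "aS \<bullet> x0 < lS"
    and pS: "\<And>R. R \<in> C \<Longrightarrow> aS \<bullet> p R = lS"
    and pz: "\<And>R R'. R \<in> C \<Longrightarrow> R' \<in> C \<Longrightarrow> R' \<noteq> R \<Longrightarrow> a R' \<bullet> p R = l R'"
    and pp: "\<And>R. R \<in> C \<Longrightarrow> a R \<bullet> p R \<ge> l R"
  shows "\<exists>W. \<forall>R\<in>C. a R \<bullet> W = \<sigma> R"
proof -
  note K = key_alg[OF fin uniq hS pS pz pp]
  define w where "w R = p R - x0" for R
  define g where "g R = a R \<bullet> w R" for R
  have gpos: "\<And>R. R \<in> C \<Longrightarrow> g R > 0" using K(1) unfolding g_def w_def by blast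
  have offd: "\<And>R R'. R \<in> C \<Longrightarrow> R' \<in> C \<Longrightarrow> a R' \<bullet> w R = (if R' = R then g R else 0)"
    using K(2) unfolding g_def w_def by blast
  define W where "W = (\<Sum>R\<in>C. (\<sigma> R / g R) *\<^sub>R w R)"
  have "a R' \<bullet> W = \<sigma> R'" if R': "R' \<in> C" for R'
  proof -
    have "a R' \<bullet> W = (\<Sum>R\<in>C. (\<sigma> R / g R) * (a R' \<bullet> w R))"
      unfolding W_def by (simp add: inner_sum_right)
    also have "\<dots> = (\<Sum>R\<in>C. (if R = R' then \<sigma> R' / g R' * g R' else 0))"
      by (rule sum.cong) (auto simp: offd R')
    also have "\<dots> = \<sigma> R'" using R' fin gpos[OF R'] by simp
    finally show ?thesis .
  qed
  then show ?thesis by blast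
qed


lemma eps_exists:
  fixes \<alpha> \<beta> :: "'i \<Rightarrow> real"
  assumes "finite I" "\<forall>i\<in>I. \<alpha> i > 0"
  shows "\<exists>\<epsilon>>0. \<forall>i\<in>I. \<alpha> i + \<epsilon> * \<beta> i > 0"
proof -
  have ev: "\<forall>i\<in>I. eventually (\<lambda>\<epsilon>. \<alpha> i + \<epsilon> * \<beta> i > 0) (at_right (0::real))"
  proof
    fix i assume i: "i \<in> I"
    have "((\<lambda>\<epsilon>. \<alpha> i + \<epsilon> * \<beta> i) \<longlongrightarrow> \<alpha> i + 0 * \<beta> i) (at_right (0::real))"
      by (intro tendsto_add tendsto_const tendsto_mult tendsto_ident_at)
    then have "((\<lambda>\<epsilon>. \<alpha> i + \<epsilon> * \<beta> i) \<longlongrightarrow> \<alpha> i) (at_right (0::real))" by simp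
    moreover have "0 < \<alpha> i" using assms(2) i by blast
    ultimately show "eventually (\<lambda>\<epsilon>. \<alpha> i + \<epsilon> * \<beta> i > 0) (at_right (0::real))"
      by (rule order_tendstoD(1))
  qed
  have "eventually (\<lambda>\<epsilon>. \<forall>i\<in>I. \<alpha> i + \<epsilon> * \<beta> i > 0) (at_right (0::real))"
    by (rule eventually_ball_finite[OF assms(1) ev])
  from this[unfolded eventually_at_right_field] obtain b where
    b: "b > 0" "\<forall>y>0. y < b \<longrightarrow> (\<forall>i\<in>I. \<alpha> i + y * \<beta> i > 0)" by blast
  have "b / 2 > 0" "b / 2 < b" using b(1) by simp_all
  then show ?thesis using b(2) by blast
qed
lemma mem_halfspace_aux: "h = {x. c \<bullet> x \<le> d} \<Longrightarrow> (y \<in> h \<longleftrightarrow> c \<bullet> y \<le> d)"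
  by simp

lemma ridge_other_facet:
  fixes P S :: "'a::euclidean_space set"
  assumes pP: "polytope P" and dP: "aff_dim P = int DIM('a)" and Sf: "S facet_of P"
    and R: "R \<in> coat S"
  shows "\<exists>F. F facet_of P \<and> F \<noteq> S \<and> R \<subseteq> F"
proof -
  have SfP: "S face_of P" using Sf facet_of_imp_face_of by blast
  have pS: "polytope S" using face_of_polytope_polytope[OF pP SfP] .
  have Sne: "S \<noteq> {}" using Sf unfolding facet_of_def by blast
  have dS: "aff_dim S = int DIM('a) - 1" using Sf dP unfolding facet_of_def by simp
  have Rc: "R face_of S \<and> aff_dim R = aff_dim S - 1" using coat_iff[OF pS Sne] R by blast
  have Rf: "R face_of S" "R \<noteq> S" using R unfolding coat_def by blast+
  have dR: "aff_dim R = aff_dim S - 1" using Rc by blast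
  show ?thesis
  proof (cases "R = {}")
    case True
    then have "aff_dim S = 0" using dR by simp
    then obtain s where s: "S = {s}" using aff_dim_eq_0[of S] by blast
    have cP: "convex P" "compact P" using pP polytope_imp_convex polytope_imp_compact by blast+
    have "\<exists>v. v extreme_point_of P \<and> v \<noteq> s"
    proof (rule ccontr)
      assume "\<not> ?thesis"
      then have "{x. x extreme_point_of P} \<subseteq> {s}" by blast
      then have "convex hull {x. x extreme_point_of P} \<subseteq> convex hull {s}" by (rule hull_mono)
      moreover have "P = convex hull {x. x extreme_point_of P}"
        by (rule Krein_Milman_Minkowski[OF cP(2) cP(1)])
      ultimately have "P \<subseteq> convex hull {s}" by (metis)
      then have "P \<subseteq> {s}" by (metis convex_hull_singleton)
      then have "aff_dim P \<le> aff_dim {s}" by (rule aff_dim_subset)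
      then show False using dP by simp
    qed
    then obtain v where v: "v extreme_point_of P" "v \<noteq> s" by blast
    have "{v} face_of P" using v(1) by (simp add: face_of_singleton)
    then have "{v} facet_of P" unfolding facet_of_def using dP \<open>aff_dim S = 0\<close> dS
      by simp
    then show ?thesis using v s True by blast
  next
    case False
    have cR: "convex R" using Rf face_of_imp_convex by blast
    obtain r where r: "r \<in> rel_interior R" using False rel_interior_eq_empty[OF cR] by blast
    have rR: "r \<in> R" using r rel_interior_subset by blast
    have RP: "R \<subseteq> P" using Rf SfP face_of_imp_subset by blast
    have affP: "affine hull P = UNIV" using dP aff_dim_eq_full by blast
    obtain Fr where Fr: "finite Fr" "P = affine hull P \<inter> \<Inter>Fr"
      "\<forall>h\<in>Fr. \<exists>a b. a \<noteq> 0 \<and> h = {x. a \<bullet> x \<le> b}"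
      "\<forall>F'. F' \<subset> Fr \<longrightarrow> P \<subset> affine hull P \<inter> \<Inter>F'"
      using polyhedron_Int_affine_minimal[THEN iffD1, OF polytope_imp_polyhedron[OF pP]] by blast
    have "\<forall>h\<in>Fr. \<exists>ab. fst ab \<noteq> 0 \<and> h = {x. fst ab \<bullet> x \<le> snd ab}" using Fr(3) by auto
    from bchoice[OF this] obtain ab where ab: "\<forall>h\<in>Fr. fst (ab h) \<noteq> 0 \<and> h = {x. fst (ab h) \<bullet> x \<le> snd (ab h)}"
      by blast
    define a where "a h = fst (ab h)" for h
    define b where "b h = snd (ab h)" for h
    have faceq: "a h \<noteq> 0 \<and> h = {x. a h \<bullet> x \<le> b h}" if "h \<in> Fr" for h
      unfolding a_def b_def by (rule ab[rule_format, OF that])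
    have psub: "\<And>F'. F' \<subset> Fr \<Longrightarrow> P \<subset> affine hull P \<inter> \<Inter>F'" by (rule Fr(4)[rule_format])
    have fexp: "G facet_of P \<longleftrightarrow> (\<exists>h. h \<in> Fr \<and> G = P \<inter> {x. a h \<bullet> x = b h})" for G
      by (rule facet_of_polyhedron_explicit[OF Fr(1) Fr(2) faceq psub])
    have PF: "P \<subseteq> \<Inter>Fr" by (metis Fr(2) Int_lower2)
    have Ph: "a h \<bullet> x \<le> b h" if h: "h \<in> Fr" and x: "x \<in> P" for h x
    proof -
      have "x \<in> h" using PF x h by blast
      then show ?thesis using mem_halfspace_aux[OF conjunct2[OF faceq[OF h]], of x] by blast
    qed
    show ?thesis
    proof (rule ccontr)
      assume nf: "\<not> ?thesis"
      have act: "affine hull S \<subseteq> {x. a h \<bullet> x = b h}" if h: "h \<in> Fr" "a h \<bullet> r = b h" for h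
      proof -
        define G where "G = P \<inter> {x. a h \<bullet> x = b h}"
        have Gf: "G facet_of P" using fexp h unfolding G_def by blast
        have "r \<in> G" using h rR RP unfolding G_def by blast
        then have "R \<subseteq> G" using subset_of_face_of[OF facet_of_imp_face_of[OF Gf] RP] r by blast
        then have "G = S" using nf Gf by blast
        then have "S \<subseteq> {x. a h \<bullet> x = b h}" unfolding G_def by blast
        then show ?thesis by (intro hull_minimal) (auto simp: affine_hyperplane)
      qed
      define U where "U = (\<Inter>h\<in>{h\<in>Fr. a h \<bullet> r < b h}. {x. a h \<bullet> x < b h})"
      have fin2: "finite {h\<in>Fr. a h \<bullet> r < b h}" using Fr(1) by simp
      have "\<forall>h\<in>{h\<in>Fr. a h \<bullet> r < b h}. open {x. a h \<bullet> x < b h}"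
        using open_halfspace_lt by blast
      then have oU: "open U" unfolding U_def by (rule open_INT[OF fin2])
      have rU: "r \<in> U" unfolding U_def by blast
      have "U \<inter> affine hull S \<subseteq> S"
      proof
        fix x assume x: "x \<in> U \<inter> affine hull S"
        have "x \<in> h" if h: "h \<in> Fr" for h
        proof (cases "a h \<bullet> r < b h")
          case True
          then have "a h \<bullet> x < b h" using x h unfolding U_def by blast
          then show ?thesis using mem_halfspace_aux[OF conjunct2[OF faceq[OF h]], of x] by simp
        next
          case False
          then have "a h \<bullet> r = b h" using Ph[OF h] rR RP by force
          then have "a h \<bullet> x = b h" using act[OF h] x by blast
          then show ?thesis using mem_halfspace_aux[OF conjunct2[OF faceq[OF h]], of x] by simp
        qed
        then have "x \<in> affine hull P \<inter> \<Inter>Fr" using affP by blast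
        then have "x \<in> P" by (metis Fr(2))
        then have "x \<in> P \<inter> affine hull S" using x by blast
        then show "x \<in> S" by (metis facet_exposed(2)[OF pP dP Sf])
      qed
      moreover have "r \<in> S" using rR Rf face_of_imp_subset by blast
      ultimately have "open U \<and> r \<in> U \<inter> S \<and> U \<inter> affine hull S \<subseteq> S" using oU rU by blast
      then have "r \<in> rel_interior S" unfolding mem_rel_interior by blast
      then show False using face_of_disjoint_rel_interior[OF Rf] rR by blast
    qed
  qed
qed


lemma affine_comb_inner:
  fixes c x0 p :: "'a::real_inner"
  shows "c \<bullet> (x0 + t *\<^sub>R (p - x0)) - e = (1 - t) * (c \<bullet> x0 - e) + t * (c \<bullet> p - e)"
  by (simp add: inner_add_right inner_diff_right algebra_simps)

theorem lemma2p8: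
  fixes P S :: "'a::euclidean_space set" and \<F> \<N> :: "'a set set"
  assumes "polytope P" and "aff_dim P = int DIM('a)"
    and "simplex_facet P S" and "bounded_position P S"
    and "\<F> \<subseteq> adj P S" and "\<N> \<subseteq> adj P S" and "\<F> \<inter> \<N> = {}"
  shows "V_S S \<F> \<N> P \<noteq> {}"
proof -
  note pP = assms(1) and dP = assms(2)
  obtain T :: "'a set" where T: "(int DIM('a) - 1) simplex T" "comb_equiv S T" and Sf: "S facet_of P"
    using assms(3) unfolding simplex_facet_def by blast
  have SfP: "S face_of P" using Sf facet_of_imp_face_of by blast
  have pS: "polytope S" using face_of_polytope_polytope[OF pP SfP] .
  have Sne: "S \<noteq> {}" using Sf unfolding facet_of_def by blast
  have dS: "aff_dim S = int DIM('a) - 1" using Sf dP unfolding facet_of_def by simp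
  have cS: "convex S" using pS polytope_imp_convex by blast
  have SP: "S \<subseteq> P" using SfP face_of_imp_subset by blast
  define C where "C = coat S"
  have cardC: "card C = DIM('a)" using transfer(1)[OF T(2) T(1) cS] unfolding C_def by simp
  have vert: "\<forall>R0\<in>C. \<exists>p\<in>S. \<forall>R\<in>C - {R0}. p \<in> R"
    using transfer(2)[OF T(2) T(1) cS] unfolding C_def .
  have CfS: "R face_of S" if "R \<in> C" for R using that unfolding C_def coat_def by blast
  have CnS: "R \<noteq> S" if "R \<in> C" for R using that unfolding C_def coat_def by blast
  have Cmax: "X = R \<or> X = S" if "R \<in> C" "X face_of S" "R \<subseteq> X" for R X
    using that unfolding C_def coat_def by blast
  have finC: "finite C"
  proof -
    have "C \<subseteq> {F. F face_of S}" using CfS by blast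
    then show ?thesis using finite_polytope_faces[OF pS] finite_subset by blast
  qed
  have Cd: "aff_dim R = int DIM('a) - 2" if "R \<in> C" for R
  proof -
    have "R face_of S \<and> aff_dim R = aff_dim S - 1" using coat_iff[OF pS Sne] that unfolding C_def by blast
    then show ?thesis using dS by simp
  qed
  have ridge: "ridge_of R P" if "R \<in> C" for R
    unfolding ridge_of_def using face_of_trans[OF CfS[OF that] SfP] Cd[OF that] dP by simp
  define A where "A = adj P S"
  have adjE: "F facet_of P \<and> F \<noteq> S \<and> F \<inter> S \<in> C" if F: "F \<in> A" for F
  proof -
    have F1: "F facet_of P" "F \<noteq> S" and "\<exists>R. ridge_of R P \<and> R \<subseteq> F \<and> R \<subseteq> S"
      using F unfolding A_def adj_def adjacent_facets_def by blast+
    then obtain R where R: "ridge_of R P" "R \<subseteq> F" "R \<subseteq> S" by blast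
    have RfP: "R face_of P" and dR: "aff_dim R = aff_dim P - 2" using R(1) unfolding ridge_of_def by blast+
    have RfS: "R face_of S" using face_of_subset[OF RfP R(3) SP] .
    have "aff_dim R = aff_dim S - 1" using dR dP dS by simp
    then have RC: "R \<in> C" using coat_iff[OF pS Sne] RfS unfolding C_def by blast
    have FfP: "F face_of P" using F1(1) facet_of_imp_face_of by blast
    have FSf: "F \<inter> S face_of S"
      using face_of_subset[OF face_of_Int[OF FfP SfP]] SP by blast
    have "F \<inter> S \<noteq> S"
    proof
      assume "F \<inter> S = S"
      then have "S \<subseteq> F" by blast
      moreover have "F \<subseteq> affine hull F" by (rule hull_subset)
      ultimately have "S \<subseteq> affine hull F" by (rule subset_trans)
      then have "S = F" using facet_sub_eq[OF pP dP F1(1) Sf] by blast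
      then show False using F1(2) by simp
    qed
    moreover have "R \<subseteq> F \<inter> S" using R by blast
    ultimately have "F \<inter> S = R" using Cmax[OF RC FSf] by blast
    then show ?thesis using F1 RC by simp
  qed
  have adjI: "F \<in> A \<and> F \<inter> S = R" if F: "F facet_of P" "F \<noteq> S" and R: "R \<in> C" "R \<subseteq> F" for F R
  proof -
    have "R \<subseteq> S" using CfS[OF R(1)] face_of_imp_subset by blast
    then have "adjacent_facets P F S" unfolding adjacent_facets_def using F Sf ridge[OF R(1)] R(2) by blast
    then have FA: "F \<in> A" unfolding A_def adj_def by simp
    have FSC: "F \<inter> S \<in> C" using adjE[OF FA] by blast
    have FfP: "F face_of P" using F(1) facet_of_imp_face_of by blast
    have FSf: "F \<inter> S face_of S"
      using face_of_subset[OF face_of_Int[OF FfP SfP]] SP by blast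
    have "R \<subseteq> F \<inter> S" using R \<open>R \<subseteq> S\<close> by blast
    then have "F \<inter> S = R \<or> F \<inter> S = S" using Cmax[OF R(1) FSf] by blast
    then show ?thesis using FA CnS[OF FSC] by blast
  qed
  have ex_tau: "\<exists>F. F \<in> A \<and> F \<inter> S = R" if R: "R \<in> C" for R
  proof -
    obtain F where "F facet_of P" "F \<noteq> S" "R \<subseteq> F"
      using ridge_other_facet[OF pP dP Sf] R unfolding C_def by blast
    then show ?thesis using adjI R by blast
  qed
  have vert': "\<forall>R0\<in>C. \<exists>q. q \<in> S \<and> (\<forall>R\<in>C - {R0}. q \<in> R)" using vert by blast
  from bchoice[OF vert'] obtain p where p: "\<forall>R\<in>C. p R \<in> S \<and> (\<forall>R'\<in>C - {R}. p R \<in> R')" by blast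
  have fi: "facet_ineq P F (na P F) (nl P F)" if "F facet_of P" for F using na_ok[OF pP dP that] .
  have Pge: "na P F \<bullet> x \<ge> nl P F" if "F facet_of P" "x \<in> P" for F x
    using fi[OF that(1)] that(2) unfolding facet_ineq_def by blast
  have onF: "na P F \<bullet> x = nl P F" if "F facet_of P" "x \<in> affine hull F" for F x
    using fi[OF that(1)] that(2) unfolding facet_ineq_def by blast
  have onF': "na P F \<bullet> x = nl P F" if "F facet_of P" "x \<in> F" for F x
    using onF[OF that(1)] hull_inc[OF that(2)] by blast
  have naz: "na P F \<noteq> 0" if "F facet_of P" for F using fi[OF that] unfolding facet_ineq_def by blast
  have pS': "na P S \<bullet> p R = nl P S" if "R \<in> C" for R using onF'[OF Sf] p that by blast
  have pz': "na P (\<tau> R') \<bullet> p R = nl P (\<tau> R')"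
    if tau: "\<forall>R\<in>C. \<tau> R \<in> A \<and> \<tau> R \<inter> S = R" and RR: "R \<in> C" "R' \<in> C" "R' \<noteq> R" for \<tau> R R'
  proof -
    have "p R \<in> R'" using p RR by blast
    then have "p R \<in> \<tau> R'" using tau RR(2) by blast
    then show ?thesis using onF' adjE tau RR(2) by blast
  qed
  have pp': "na P (\<tau> R) \<bullet> p R \<ge> nl P (\<tau> R)"
    if tau: "\<forall>R\<in>C. \<tau> R \<in> A \<and> \<tau> R \<inter> S = R" and R: "R \<in> C" for \<tau> R
  proof -
    have "p R \<in> P" using p R SP by blast
    then show ?thesis using Pge adjE tau R by blast
  qed
  have trans: "\<exists>x0. (\<forall>y. (\<forall>R\<in>C. na P (\<tau> R) \<bullet> y = nl P (\<tau> R)) \<longleftrightarrow> y = x0) \<and> na P S \<bullet> x0 < nl P S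
      \<and> (\<forall>G. G facet_of P \<and> G \<notin> \<tau> ` C \<and> G \<noteq> S \<longrightarrow> na P G \<bullet> x0 > nl P G)"
    if tau: "\<forall>R\<in>C. \<tau> R \<in> A \<and> \<tau> R \<inter> S = R" for \<tau>
  proof -
    have tf: "\<tau> R facet_of P" if "R \<in> C" for R using adjE tau that by blast
    have inj: "inj_on \<tau> C"
    proof
      fix R R' assume "R \<in> C" "R' \<in> C" "\<tau> R = \<tau> R'"
      then show "R = R'" using tau by metis
    qed
    have sub: "\<tau> ` C \<subseteq> adj P S" using tau unfolding A_def by blast
    have card: "card (\<tau> ` C) = DIM('a)" using card_image[OF inj] cardC by simp
    have "\<exists>x. (\<Inter>F\<in>\<tau> ` C. Hyp F) = {x} \<and> x \<in> Hminus P S"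
      using assms(4)[unfolded bounded_position_def, rule_format, OF conjI[OF sub card]] .
    then obtain x0 where x0: "(\<Inter>F\<in>\<tau> ` C. Hyp F) = {x0}" "x0 \<in> Hminus P S"
      by (elim exE conjE) (rule that)
    have uniq: "(\<forall>R\<in>C. na P (\<tau> R) \<bullet> y = nl P (\<tau> R)) \<longleftrightarrow> y = x0" for y
    proof -
      have "y \<in> (\<Inter>F\<in>\<tau> ` C. Hyp F) \<longleftrightarrow> (\<forall>R\<in>C. y \<in> Hyp (\<tau> R))" by simp
      also have "\<dots> \<longleftrightarrow> (\<forall>R\<in>C. na P (\<tau> R) \<bullet> y = nl P (\<tau> R))"
        using Hyp_iff[OF pP dP tf] by simp
      finally have e0: "y \<in> (\<Inter>F\<in>\<tau> ` C. Hyp F) \<longleftrightarrow> (\<forall>R\<in>C. na P (\<tau> R) \<bullet> y = nl P (\<tau> R))" .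
      have e1: "y \<in> (\<Inter>F\<in>\<tau> ` C. Hyp F) \<longleftrightarrow> y = x0" by (simp only: x0(1) singleton_iff)
      from e0 e1 show ?thesis by blast
    qed
    have hS: "na P S \<bullet> x0 < nl P S" using x0(2) Hminus_iff[OF pP dP Sf] by blast
    have sign: "na P G \<bullet> x0 > nl P G" if G: "G facet_of P" "G \<notin> \<tau> ` C" "G \<noteq> S" for G
    proof (rule ccontr)
      assume "\<not> ?thesis"
      then have G0: "na P G \<bullet> x0 \<le> nl P G" by simp
      have Gp: "na P G \<bullet> p R \<ge> nl P G" if "R \<in> C" for R
        using Pge[OF G(1)] p that SP by blast
      obtain \<mu>0 \<mu> where mu: "\<mu>0 \<ge> 0" "\<forall>R\<in>C. \<mu> R \<ge> 0"
        "\<forall>x. na P G \<bullet> x - nl P G = \<mu>0 * (na P S \<bullet> x - nl P S) + (\<Sum>R\<in>C. \<mu> R * (na P (\<tau> R) \<bullet> x - nl P (\<tau> R)))"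
        using key_sign[where a="\<lambda>R. na P (\<tau> R)" and l="\<lambda>R. nl P (\<tau> R)" and p=p,
            OF finC uniq hS pS' pz'[OF tau] pp'[OF tau] G0 Gp] by blast
      have zero: "\<mu>0 * (na P S \<bullet> y - nl P S) = 0 \<and> (\<forall>R\<in>C. \<mu> R * (na P (\<tau> R) \<bullet> y - nl P (\<tau> R)) = 0)"
        if y: "y \<in> G" for y
      proof -
        have yP: "y \<in> P" using y G(1) facet_of_imp_subset by blast
        have "na P G \<bullet> y - nl P G = 0" using onF'[OF G(1) y] by simp
        then have eq: "\<mu>0 * (na P S \<bullet> y - nl P S) + (\<Sum>R\<in>C. \<mu> R * (na P (\<tau> R) \<bullet> y - nl P (\<tau> R))) = 0"
          using mu(3) by metis
        have t0: "\<mu>0 * (na P S \<bullet> y - nl P S) \<ge> 0" using mu(1) Pge[OF Sf yP] by simp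
        have tR: "\<forall>R\<in>C. \<mu> R * (na P (\<tau> R) \<bullet> y - nl P (\<tau> R)) \<ge> 0"
          using mu(2) Pge[OF tf yP] by simp
        have ts: "(\<Sum>R\<in>C. \<mu> R * (na P (\<tau> R) \<bullet> y - nl P (\<tau> R))) \<ge> 0"
          using tR by (simp add: sum_nonneg)
        have "(\<Sum>R\<in>C. \<mu> R * (na P (\<tau> R) \<bullet> y - nl P (\<tau> R))) = 0" using eq t0 ts by linarith
        moreover have "(\<Sum>R\<in>C. \<mu> R * (na P (\<tau> R) \<bullet> y - nl P (\<tau> R))) = 0 \<longleftrightarrow>
            (\<forall>R\<in>C. \<mu> R * (na P (\<tau> R) \<bullet> y - nl P (\<tau> R)) = 0)"
          by (rule sum_nonneg_eq_0_iff[OF finC]) (use tR in blast)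
        ultimately have "\<forall>R\<in>C. \<mu> R * (na P (\<tau> R) \<bullet> y - nl P (\<tau> R)) = 0"
          by (rule rev_iffD1)
        moreover have "\<mu>0 * (na P S \<bullet> y - nl P S) = 0" using eq t0 ts by linarith
        ultimately show ?thesis by blast
      qed
      show False
      proof (cases "\<exists>R\<in>C. \<mu> R > 0")
        case True
        then obtain R where R: "R \<in> C" "\<mu> R > 0" by blast
        have "\<forall>y\<in>G. na P (\<tau> R) \<bullet> y = nl P (\<tau> R)"
        proof
          fix y assume "y \<in> G"
          then have "\<mu> R * (na P (\<tau> R) \<bullet> y - nl P (\<tau> R)) = 0" using zero R(1) by blast
          then show "na P (\<tau> R) \<bullet> y = nl P (\<tau> R)" using R(2) by simp
        qed
        then have "G \<subseteq> Hyp (\<tau> R)" using Hyp_iff[OF pP dP tf[OF R(1)]] by blast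
        then have "G = \<tau> R" using facet_sub_eq[OF pP dP tf[OF R(1)] G(1)] unfolding Hyp_def by blast
        then show False using G(2) R(1) by blast
      next
        case False
        then have mu0: "\<forall>R\<in>C. \<mu> R = 0" using mu(2) by force
        show False
        proof (cases "\<mu>0 > 0")
          case True
          have "\<forall>y\<in>G. na P S \<bullet> y = nl P S"
          proof
            fix y assume "y \<in> G"
            then have "\<mu>0 * (na P S \<bullet> y - nl P S) = 0" using zero by blast
            then show "na P S \<bullet> y = nl P S" using True by simp
          qed
          then have "G \<subseteq> Hyp S" using Hyp_iff[OF pP dP Sf] by blast
          then have "G = S" using facet_sub_eq[OF pP dP Sf G(1)] unfolding Hyp_def by blast
          then show False using G(3) by blast
        next
          case False
          then have "\<mu>0 = 0" using mu(1) by simp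
          then have all0: "na P G \<bullet> x - nl P G = 0" for x using mu(3) mu0 by simp
          have "nl P G = 0" using all0[of 0] by simp
          then have "na P G \<bullet> na P G = 0" using all0[of "na P G"] by simp
          then show False using naz[OF G(1)] by simp
        qed
      qed
    qed
    show ?thesis using uniq hS sign by blast
  qed
  have "\<forall>R\<in>C. \<exists>F. F \<in> A \<and> F \<inter> S = R"
  proof
    fix R assume "R \<in> C"
    then show "\<exists>F. F \<in> A \<and> F \<inter> S = R" by (rule ex_tau)
  qed
  from bchoice[OF this] obtain \<tau>0 where tau0: "\<forall>R\<in>C. \<tau>0 R \<in> A \<and> \<tau>0 R \<inter> S = R"
    by (elim exE) (rule that)
  have Aeq: "A = \<tau>0 ` C"
  proof
    show "\<tau>0 ` C \<subseteq> A" using tau0 by blast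
  next
    show "A \<subseteq> \<tau>0 ` C"
    proof
      fix F assume FA: "F \<in> A"
      define R where "R = F \<inter> S"
      have RC: "R \<in> C" and Ff: "F facet_of P" and FnS: "F \<noteq> S" using adjE[OF FA] unfolding R_def by blast+
      show "F \<in> \<tau>0 ` C"
      proof (rule ccontr)
        assume nF: "F \<notin> \<tau>0 ` C"
        then have Fne: "F \<noteq> \<tau>0 R" using RC by blast
        define \<tau>1 where "\<tau>1 = \<tau>0(R := F)"
        have tau1: "\<forall>R'\<in>C. \<tau>1 R' \<in> A \<and> \<tau>1 R' \<inter> S = R'"
          unfolding \<tau>1_def using tau0 FA R_def by auto
        obtain x0 where x0: "\<forall>y. (\<forall>R\<in>C. na P (\<tau>0 R) \<bullet> y = nl P (\<tau>0 R)) \<longleftrightarrow> y = x0"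
          "na P S \<bullet> x0 < nl P S"
          "\<forall>G. G facet_of P \<and> G \<notin> \<tau>0 ` C \<and> G \<noteq> S \<longrightarrow> na P G \<bullet> x0 > nl P G"
          using trans[OF tau0] by blast
        obtain x1 where x1: "\<forall>y. (\<forall>R\<in>C. na P (\<tau>1 R) \<bullet> y = nl P (\<tau>1 R)) \<longleftrightarrow> y = x1"
          "na P S \<bullet> x1 < nl P S"
          "\<forall>G. G facet_of P \<and> G \<notin> \<tau>1 ` C \<and> G \<noteq> S \<longrightarrow> na P G \<bullet> x1 > nl P G"
          using trans[OF tau1] by blast
        have gF0: "na P F \<bullet> x0 > nl P F" using x0(3) Ff nF FnS by blast
        have "\<tau>0 R \<notin> \<tau>1 ` C"
        proof
          assume "\<tau>0 R \<in> \<tau>1 ` C"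
          then obtain R'' where R'': "R'' \<in> C" "\<tau>0 R = \<tau>1 R''" by blast
          show False
          proof (cases "R'' = R")
            case True
            then show False using R'' Fne unfolding \<tau>1_def by simp
          next
            case False
            then have "\<tau>0 R = \<tau>0 R''" using R'' unfolding \<tau>1_def by simp
            then have "R = R''" using tau0 RC R''(1) by metis
            then show False using False by simp
          qed
        qed
        moreover have "\<tau>0 R facet_of P" "\<tau>0 R \<noteq> S" using adjE tau0 RC by blast+
        ultimately have g1: "na P (\<tau>0 R) \<bullet> x1 > nl P (\<tau>0 R)" using x1(3) by blast
        have uniq0: "\<And>y. (\<forall>R\<in>C. na P (\<tau>0 R) \<bullet> y = nl P (\<tau>0 R)) \<longleftrightarrow> y = x0" using x0(1) by blast
        note K = key_alg[where a="\<lambda>R. na P (\<tau>0 R)" and l="\<lambda>R. nl P (\<tau>0 R)" and p=p,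
            OF finC uniq0 x0(2) pS' pz'[OF tau0] pp'[OF tau0]]
        have ax0: "na P (\<tau>0 R') \<bullet> x0 = nl P (\<tau>0 R')" if "R' \<in> C" for R' using x0(1) that by blast
        have ax1: "na P (\<tau>1 R') \<bullet> x1 = nl P (\<tau>1 R')" if "R' \<in> C" for R' using x1(1) that by blast
        define v where "v = x1 - x0"
        define \<gamma> where "\<gamma> = na P (\<tau>0 R) \<bullet> (p R - x0)"
        have \<gamma>pos: "\<gamma> > 0" using K(1) RC unfolding \<gamma>_def by blast
        have "v = (\<Sum>R'\<in>C. ((na P (\<tau>0 R') \<bullet> v) / (na P (\<tau>0 R') \<bullet> (p R' - x0))) *\<^sub>R (p R' - x0))"
          by (rule K(3))
        also have "\<dots> = (\<Sum>R'\<in>C. (if R' = R then ((na P (\<tau>0 R) \<bullet> v) / \<gamma>) *\<^sub>R (p R - x0) else 0))"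
        proof (rule sum.cong)
          fix R' assume R': "R' \<in> C"
          show "((na P (\<tau>0 R') \<bullet> v) / (na P (\<tau>0 R') \<bullet> (p R' - x0))) *\<^sub>R (p R' - x0)
              = (if R' = R then ((na P (\<tau>0 R) \<bullet> v) / \<gamma>) *\<^sub>R (p R - x0) else 0)"
          proof (cases "R' = R")
            case True then show ?thesis unfolding \<gamma>_def by simp
          next
            case False
            then have "\<tau>1 R' = \<tau>0 R'" unfolding \<tau>1_def by simp
            then have "na P (\<tau>0 R') \<bullet> x1 = nl P (\<tau>0 R')" using ax1[OF R'] by simp
            then have "na P (\<tau>0 R') \<bullet> v = 0" using ax0[OF R'] unfolding v_def by (simp add: inner_diff_right)
            then show ?thesis using False by simp
          qed
        qed simp
        also have "\<dots> = ((na P (\<tau>0 R) \<bullet> v) / \<gamma>) *\<^sub>R (p R - x0)" using RC finC by simp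
        finally have vt: "v = ((na P (\<tau>0 R) \<bullet> v) / \<gamma>) *\<^sub>R (p R - x0)" .
        define t where "t = (na P (\<tau>0 R) \<bullet> v) / \<gamma>"
        have vt2: "v = t *\<^sub>R (p R - x0)" unfolding t_def by (rule vt)
        have "x1 = x0 + v" unfolding v_def by simp
        then have x1t: "x1 = x0 + t *\<^sub>R (p R - x0)" using vt2 by simp
        have "na P (\<tau>0 R) \<bullet> v > 0" using g1 ax0[OF RC] unfolding v_def by (simp add: inner_diff_right)
        then have tpos: "t > 0" unfolding t_def using \<gamma>pos by simp
        have "na P S \<bullet> x1 - nl P S = (1 - t) * (na P S \<bullet> x0 - nl P S) + t * (na P S \<bullet> p R - nl P S)"
          unfolding x1t by (rule affine_comb_inner)
        then have "na P S \<bullet> x1 - nl P S = (1 - t) * (na P S \<bullet> x0 - nl P S)" using pS'[OF RC] by simp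
        then have "(1 - t) * (na P S \<bullet> x0 - nl P S) < 0" using x1(2) by simp
        then have t1: "1 - t > 0" using x0(2) by (simp add: mult_less_0_iff)
        have "\<tau>1 R = F" unfolding \<tau>1_def by simp
        then have gF1: "na P F \<bullet> x1 - nl P F = 0" using ax1[OF RC] by simp
        have "na P F \<bullet> x1 - nl P F = (1 - t) * (na P F \<bullet> x0 - nl P F) + t * (na P F \<bullet> p R - nl P F)"
          unfolding x1t by (rule affine_comb_inner)
        moreover have "(1 - t) * (na P F \<bullet> x0 - nl P F) > 0" using t1 gF0 by simp
        moreover have "t * (na P F \<bullet> p R - nl P F) \<ge> 0"
          using tpos Pge[OF Ff] p RC SP by (simp add: subset_iff)
        ultimately show False using gF1 by linarith
      qed
    qed
  qed
  obtain x0 where x0: "\<forall>y. (\<forall>R\<in>C. na P (\<tau>0 R) \<bullet> y = nl P (\<tau>0 R)) \<longleftrightarrow> y = x0"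
    "na P S \<bullet> x0 < nl P S"
    "\<forall>G. G facet_of P \<and> G \<notin> \<tau>0 ` C \<and> G \<noteq> S \<longrightarrow> na P G \<bullet> x0 > nl P G"
    using trans[OF tau0] by blast
  have uniq0: "\<And>y. (\<forall>R\<in>C. na P (\<tau>0 R) \<bullet> y = nl P (\<tau>0 R)) \<longleftrightarrow> y = x0" using x0(1) by blast
  have ax0: "na P (\<tau>0 R') \<bullet> x0 = nl P (\<tau>0 R')" if "R' \<in> C" for R' using x0(1) that by blast
  define \<sigma> where "\<sigma> F = (if F \<in> \<F> then 0 else if F \<in> \<N> then -1 else (1::real))" for F
  obtain W where W: "\<forall>R\<in>C. na P (\<tau>0 R) \<bullet> W = \<sigma> (\<tau>0 R)"
    using key_solve[where a="\<lambda>R. na P (\<tau>0 R)" and l="\<lambda>R. nl P (\<tau>0 R)" and p=p and \<sigma>="\<lambda>R. \<sigma> (\<tau>0 R)",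
        OF finC uniq0 x0(2) pS' pz'[OF tau0] pp'[OF tau0]] by blast
  define I where "I = {G. G facet_of P \<and> G \<notin> \<tau>0 ` C}"
  have finI: "finite I" using finite_polytope_facets[OF pP] unfolding I_def by (rule finite_subset[rotated]) blast
  define \<alpha> where "\<alpha> G = (if G = S then nl P S - na P S \<bullet> x0 else na P G \<bullet> x0 - nl P G)" for G
  define \<beta> where "\<beta> G = (if G = S then - (na P S \<bullet> W) else na P G \<bullet> W)" for G
  have apos: "\<forall>G\<in>I. \<alpha> G > 0" unfolding I_def \<alpha>_def using x0(2,3) by auto
  obtain \<epsilon> where eps: "\<epsilon> > 0" "\<forall>G\<in>I. \<alpha> G + \<epsilon> * \<beta> G > 0"
    using eps_exists[OF finI apos] by blast
  define x where "x = x0 + \<epsilon> *\<^sub>R W"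
  have xG: "na P G \<bullet> x - nl P G = (na P G \<bullet> x0 - nl P G) + \<epsilon> * (na P G \<bullet> W)" for G
    unfolding x_def by (simp add: inner_add_right)
  have xC: "na P F \<bullet> x - nl P F = \<epsilon> * \<sigma> F" if FA: "F \<in> A" for F
  proof -
    have "F \<in> \<tau>0 ` C" using FA Aeq by simp
    then obtain R where R: "R \<in> C" "F = \<tau>0 R" by blast
    show ?thesis using xG[of F] ax0[OF R(1)] W R by simp
  qed
  have SnC: "S \<notin> \<tau>0 ` C" using tau0 adjE by blast
  have SI: "S \<in> I" unfolding I_def using Sf SnC by blast
  have "x \<in> V_S S \<F> \<N> P"
    unfolding V_S_def
  proof (intro CollectI conjI ballI allI impI)
    fix F assume F: "F \<in> \<N> \<union> {S}"
    show "x \<in> Hminus P F"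
    proof (cases "F = S")
      case True
      have "\<alpha> S + \<epsilon> * \<beta> S > 0" using eps(2) SI by blast
      then have "na P S \<bullet> x < nl P S" using xG[of S] unfolding \<alpha>_def \<beta>_def by simp
      then show ?thesis using True Hminus_iff[OF pP dP Sf] by blast
    next
      case False
      then have FN: "F \<in> \<N>" using F by blast
      then have FA: "F \<in> A" using assms(6) unfolding A_def by blast
      have "F \<notin> \<F>" using FN assms(7) by blast
      then have "\<sigma> F = -1" using FN unfolding \<sigma>_def by simp
      then have "na P F \<bullet> x < nl P F" using xC[OF FA] eps(1) by simp
      then show ?thesis using Hminus_iff[OF pP dP] adjE[OF FA] by blast
    qed
  next
    fix F assume F: "F \<in> \<F>"
    then have FA: "F \<in> A" using assms(5) unfolding A_def by blast
    have "\<sigma> F = 0" using F unfolding \<sigma>_def by simp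
    then have "na P F \<bullet> x = nl P F" using xC[OF FA] by simp
    then show "x \<in> Hyp F" using Hyp_iff[OF pP dP] adjE[OF FA] by blast
  next
    fix F assume F: "F facet_of P \<and> F \<notin> \<N> \<union> {S} \<union> \<F>"
    show "x \<in> Hplus P F"
    proof (cases "F \<in> \<tau>0 ` C")
      case True
      then have FA: "F \<in> A" using Aeq by blast
      have "\<sigma> F = 1" using F unfolding \<sigma>_def by simp
      then have "na P F \<bullet> x > nl P F" using xC[OF FA] eps(1) by simp
      then show ?thesis using Hplus_iff[OF pP dP] F by blast
    next
      case False
      then have FI: "F \<in> I" unfolding I_def using F by blast
      have FS: "F \<noteq> S" using F by blast
      have "\<alpha> F + \<epsilon> * \<beta> F > 0" using eps(2) FI by blast
      then have "na P F \<bullet> x > nl P F" using xG[of F] FS unfolding \<alpha>_def \<beta>_def by simp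
      then show ?thesis using Hplus_iff[OF pP dP] F by blast
    qed
  qed
  then show ?thesis by blast
qed

end
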